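(* Let $\mathcal{Q}$ be a finite poset equipped with the discrete $\sigma$-algebra (all subsets). Then the map \[ \psi\colon \mu\longmapsto \int_{\mathcal{Q}}\dim(-)\,d\mu \] from the set of measures on the discrete $\sigma$-algebra of $\mathcal{Q}$ to the set of additive amplitudes on $\mathrm{Vect}^{\mathcal{Q}}$ is a bijection. That is, for every additive amplitude $\alpha$ on $\mathrm{Vect}^{\mathcal{Q}}$ there is a unique measure $\mu$ on $\mathcal{Q}$ with $\alpha(M)=\int_{\mathcal{Q}}\dim M(q)\,d\mu(q)$ for all $M$.
   Context: $\mathrm{Vect}$ is the category of finite-dimensional vector spaces over a fixed field, and $\mathrm{Vect}^{\mathcal{Q}}$ is the (abelian) category of functors $\mathcal{Q}\to\mathrm{Vect}$ (persistence modules), with $\mathcal{Q}$ viewed as a category. For an abelian category $\mathcal{A}$, an amplitude is a function $\alpha\colon\operatorname{ob}\mathcal{A}\to[0,\infty]$ with $\alpha(0)=0$ such that for every short exact sequence $0\to A\to B\to C\to 0$, $\alpha(A)\le\alpha(B)$, $\alpha(C)\le\alpha(B)$ and $\alpha(B)\le\alpha(A)+\alpha(C)$; it is additive if always $\alpha(B)=\alpha(A)+\alpha(C)$. *)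

theory Defs
  imports "HOL-Analysis.Nonnegative_Lebesgue_Integration" "Jordan_Normal_Form.Matrix"
begin

text \<open>Concrete model of the functor category Vect^Q over a field 'k:
  a persistence module assigns to each q the space 'k^(d q) and to each
  relation q \<le> r a (d r) x (d q) matrix, functorially. For incomparable
  pairs the matrix slot is normalised to the zero matrix.\<close>

definition is_pmod :: "('q::order \<Rightarrow> nat) \<times> ('q \<Rightarrow> 'q \<Rightarrow> 'k::field mat) \<Rightarrow> bool" where
  "is_pmod = (\<lambda>(d, m).
      (\<forall>q r. q \<le> r \<longrightarrow> m q r \<in> carrier_mat (d r) (d q)) \<and>
      (\<forall>q r. \<not> q \<le> r \<longrightarrow> m q r = 0\<^sub>m (d r) (d q)) \<and>
      (\<forall>q. m q q = 1\<^sub>m (d q)) \<and>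
      (\<forall>q r s. q \<le> r \<longrightarrow> r \<le> s \<longrightarrow> m q s = m r s * m q r))"

typedef (overloaded) ('q, 'k) pmod =
  "{M :: ('q::order \<Rightarrow> nat) \<times> ('q \<Rightarrow> 'q \<Rightarrow> 'k::field mat). is_pmod M}"
  by (rule exI[of _ "(\<lambda>_. 0, \<lambda>_ _. 0\<^sub>m 0 0)"]) (auto simp: is_pmod_def)

definition pdim :: "('q::order, 'k::field) pmod \<Rightarrow> 'q \<Rightarrow> nat" where
  "pdim M = fst (Rep_pmod M)"

definition pmap :: "('q::order, 'k::field) pmod \<Rightarrow> 'q \<Rightarrow> 'q \<Rightarrow> 'k mat" where
  "pmap M = snd (Rep_pmod M)"

definition is_morph :: "('q::order, 'k::field) pmod \<Rightarrow> ('q, 'k) pmod \<Rightarrow> ('q \<Rightarrow> 'k mat) \<Rightarrow> bool" where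
  "is_morph M N f \<longleftrightarrow>
     (\<forall>q. f q \<in> carrier_mat (pdim N q) (pdim M q)) \<and>
     (\<forall>q r. q \<le> r \<longrightarrow> pmap N q r * f q = f r * pmap M q r)"

text \<open>Short exact sequences 0 \<rightarrow> A \<rightarrow> B \<rightarrow> C \<rightarrow> 0 (exactness is pointwise in the functor category).\<close>
definition short_exact :: "('q::order, 'k::field) pmod \<Rightarrow> ('q, 'k) pmod \<Rightarrow> ('q, 'k) pmod \<Rightarrow> bool" where
  "short_exact A B C \<longleftrightarrow> (\<exists>f g. is_morph A B f \<and> is_morph B C g \<and>
     (\<forall>q.
       (\<forall>u \<in> carrier_vec (pdim A q). f q *\<^sub>v u = 0\<^sub>v (pdim B q) \<longrightarrow> u = 0\<^sub>v (pdim A q)) \<and>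
       (\<forall>v \<in> carrier_vec (pdim B q). g q *\<^sub>v v = 0\<^sub>v (pdim C q) \<longleftrightarrow>
            (\<exists>u \<in> carrier_vec (pdim A q). f q *\<^sub>v u = v)) \<and>
       (\<forall>w \<in> carrier_vec (pdim C q). \<exists>v \<in> carrier_vec (pdim B q). g q *\<^sub>v v = w)))"

definition zero_pmod :: "('q::order, 'k::field) pmod" where
  "zero_pmod = Abs_pmod (\<lambda>_. 0, \<lambda>_ _. 0\<^sub>m 0 0)"

definition amplitude :: "(('q::order, 'k::field) pmod \<Rightarrow> ennreal) \<Rightarrow> bool" where
  "amplitude \<alpha> \<longleftrightarrow> \<alpha> zero_pmod = 0 \<and>
     (\<forall>A B C. short_exact A B C \<longrightarrow> \<alpha> A \<le> \<alpha> B \<and> \<alpha> C \<le> \<alpha> B \<and> \<alpha> B \<le> \<alpha> A + \<alpha> C)"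

definition additive_amplitude :: "(('q::order, 'k::field) pmod \<Rightarrow> ennreal) \<Rightarrow> bool" where
  "additive_amplitude \<alpha> \<longleftrightarrow> amplitude \<alpha> \<and>
     (\<forall>A B C. short_exact A B C \<longrightarrow> \<alpha> B = \<alpha> A + \<alpha> C)"

definition discrete_measure :: "'q measure \<Rightarrow> bool" where
  "discrete_measure \<mu> \<longleftrightarrow> space \<mu> = UNIV \<and> sets \<mu> = Pow UNIV"

definition psi :: "'q measure \<Rightarrow> ('q::order, 'k::field) pmod \<Rightarrow> ennreal" where
  "psi \<mu> = (\<lambda>M. \<integral>\<^sup>+ q. of_nat (pdim M q) \<partial>\<mu>)"

end

theory Submission
  imports Defs "Jordan_Normal_Form.VS_Connect"
begin

lemma mat_linear_map:
  assumes A: "A \<in> carrier_mat n m"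
  shows "linear_map class_ring (module_vec TYPE('k::field) m) (module_vec TYPE('k) n) (\<lambda>v. A *\<^sub>v v)"
  unfolding linear_map_def mod_hom_def mod_hom_axioms_def module_hom_def
  using vec_vs[of m] vec_vs[of n] A
  by (auto simp: vectorspace_def module_vec_simps mult_add_distrib_mat_vec mult_mat_vec)

lemma fin_dim_vec: "vectorspace.fin_dim class_ring (module_vec TYPE('k::field) n)"
  by (rule vec_space.fin_dim)

lemma ses_dim:
  fixes F :: "'k::field mat"
  assumes F: "F \<in> carrier_mat nb na" and G: "G \<in> carrier_mat nc nb"
    and inj: "\<forall>u \<in> carrier_vec na. F *\<^sub>v u = 0\<^sub>v nb \<longrightarrow> u = 0\<^sub>v na"
    and ex: "\<forall>v \<in> carrier_vec nb. G *\<^sub>v v = 0\<^sub>v nc \<longleftrightarrow> (\<exists>u \<in> carrier_vec na. F *\<^sub>v u = v)"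
    and surj: "\<forall>w \<in> carrier_vec nc. \<exists>v \<in> carrier_vec nb. G *\<^sub>v v = w"
  shows "nb = na + nc"
proof -
  interpret LF: linear_map class_ring "module_vec TYPE('k) na" "module_vec TYPE('k) nb" "\<lambda>v. F *\<^sub>v v"
    by (rule mat_linear_map[OF F])
  interpret LG: linear_map class_ring "module_vec TYPE('k) nb" "module_vec TYPE('k) nc" "\<lambda>v. G *\<^sub>v v"
    by (rule mat_linear_map[OF G])
  have rF: "vectorspace.dim class_ring ((module_vec TYPE('k) nb)\<lparr>carrier := LF.imT\<rparr>) +
     vectorspace.dim class_ring ((module_vec TYPE('k) na)\<lparr>carrier := LF.kerT\<rparr>) = na"
    using LF.rank_nullity[OF fin_dim_vec] vec_space.dim_is_n by metis
  have rG: "vectorspace.dim class_ring ((module_vec TYPE('k) nc)\<lparr>carrier := LG.imT\<rparr>) +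
     vectorspace.dim class_ring ((module_vec TYPE('k) nb)\<lparr>carrier := LG.kerT\<rparr>) = nb"
    using LG.rank_nullity[OF fin_dim_vec] vec_space.dim_is_n by metis
  have injF: "inj_on (\<lambda>v. F *\<^sub>v v) (carrier (module_vec TYPE('k) na))"
  proof (rule inj_onI)
    fix x y assume x: "x \<in> carrier (module_vec TYPE('k) na)" and y: "y \<in> carrier (module_vec TYPE('k) na)"
      and e: "F *\<^sub>v x = F *\<^sub>v y"
    have xc: "x \<in> carrier_vec na" "y \<in> carrier_vec na" using x y by (auto simp: module_vec_simps)
    have "F *\<^sub>v (x - y) = F *\<^sub>v x - F *\<^sub>v y" using F xc by (simp add: mult_minus_distrib_mat_vec)
    also have "\<dots> = 0\<^sub>v nb" using e F xc by simp
    finally have "x - y = 0\<^sub>v na" using inj xc by simp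
    then have "\<And>i. i < na \<Longrightarrow> vec_index x i = vec_index y i" using xc
      by (metis index_minus_vec(1) index_zero_vec(1) carrier_vecD right_minus_eq)
    then show "x = y" using xc by (auto intro: eq_vecI)
  qed
  have k0: "vectorspace.dim class_ring ((module_vec TYPE('k) na)\<lparr>carrier := LF.kerT\<rparr>) = 0"
    using LF.inj_imp_dim_ker0[OF injF] .
  have imG: "LG.imT = carrier_vec nc"
    unfolding LG.im_def using surj G by (auto simp: module_vec_simps)
  have eqset: "LG.kerT = LF.imT"
    unfolding LG.ker_def LF.im_def using ex F G by (auto simp: module_vec_simps)
  have "vectorspace.dim class_ring ((module_vec TYPE('k) nc)\<lparr>carrier := LG.imT\<rparr>) = nc"
  proof -
    have "(module_vec TYPE('k) nc)\<lparr>carrier := LG.imT\<rparr> = module_vec TYPE('k) nc"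
      using imG by (simp add: module_vec_def)
    then show ?thesis using vec_space.dim_is_n by metis
  qed
  then show ?thesis using rF rG k0 eqset by simp
qed

no_notation Finite_Cartesian_Product.vec_nth (infixl "$" 90)

lemma mat_eq_zero_dim:
  assumes "A \<in> carrier_mat a b" "B \<in> carrier_mat a b" "a = 0 \<or> b = 0"
  shows "A = B"
  using assms by (auto intro!: eq_matI)

lemma pmod_is: "is_pmod (pdim M, pmap M)"
  using Rep_pmod[of M] by (simp add: pdim_def pmap_def)

lemma pmap_carrier: "q \<le> r \<Longrightarrow> pmap M q r \<in> carrier_mat (pdim M r) (pdim M q)"
  using pmod_is[of M] unfolding is_pmod_def prod.case by blast
lemma pmap_nle: "\<not> q \<le> r \<Longrightarrow> pmap M q r = 0\<^sub>m (pdim M r) (pdim M q)"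
  using pmod_is[of M] unfolding is_pmod_def prod.case by blast
lemma pmap_carrier': "pmap M q r \<in> carrier_mat (pdim M r) (pdim M q)"
  by (cases "q \<le> r") (auto simp: pmap_carrier pmap_nle)
lemma pmap_id: "pmap M q q = 1\<^sub>m (pdim M q)"
  using pmod_is[of M] unfolding is_pmod_def prod.case by blast
lemma pmap_comp: "q \<le> r \<Longrightarrow> r \<le> s \<Longrightarrow> pmap M q s = pmap M r s * pmap M q r"
  using pmod_is[of M] unfolding is_pmod_def prod.case by blast

lemma Abs_pmod_dim: "is_pmod (d, m) \<Longrightarrow> pdim (Abs_pmod (d, m)) = d"
  by (simp add: pdim_def Abs_pmod_inverse)
lemma Abs_pmod_map: "is_pmod (d, m) \<Longrightarrow> pmap (Abs_pmod (d, m)) = m"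
  by (simp add: pmap_def Abs_pmod_inverse)

lemma pdim_zero[simp]: "pdim (zero_pmod :: ('q::order,'k::field) pmod) = (\<lambda>_. 0)"
  unfolding zero_pmod_def by (rule Abs_pmod_dim) (auto simp: is_pmod_def)

lemma all_zero_pmod:
  fixes M :: "('q::order,'k::field) pmod"
  assumes "\<And>q. pdim M q = 0"
  shows "M = zero_pmod"
proof -
  have z: "is_pmod ((\<lambda>_. 0, \<lambda>_ _. 0\<^sub>m 0 0) :: ('q \<Rightarrow> nat) \<times> ('q \<Rightarrow> 'q \<Rightarrow> 'k mat))"
    by (auto simp: is_pmod_def)
  have "pmap M = (\<lambda>_ _. 0\<^sub>m 0 0)"
    using pmap_carrier'[of M] assms by (intro ext mat_eq_zero_dim[where a=0 and b=0]) auto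
  moreover have R: "Rep_pmod (zero_pmod :: ('q,'k) pmod) = (\<lambda>_. 0, \<lambda>_ _. 0\<^sub>m 0 0)"
    unfolding zero_pmod_def by (rule Abs_pmod_inverse) (simp add: z)
  ultimately have "Rep_pmod M = Rep_pmod (zero_pmod :: ('q,'k) pmod)"
    using assms unfolding R by (simp add: pdim_def pmap_def prod_eq_iff fun_eq_iff)
  then show ?thesis by (simp add: Rep_pmod_inject)
qed

lemma short_exact_dim:
  assumes "short_exact A B C"
  shows "pdim B q = pdim A q + pdim C q"
proof -
  from assms obtain f g where f: "is_morph A B f" and g: "is_morph B C g" and
    ex: "\<forall>q.
       (\<forall>u \<in> carrier_vec (pdim A q). f q *\<^sub>v u = 0\<^sub>v (pdim B q) \<longrightarrow> u = 0\<^sub>v (pdim A q)) \<and>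
       (\<forall>v \<in> carrier_vec (pdim B q). g q *\<^sub>v v = 0\<^sub>v (pdim C q) \<longleftrightarrow>
            (\<exists>u \<in> carrier_vec (pdim A q). f q *\<^sub>v u = v)) \<and>
       (\<forall>w \<in> carrier_vec (pdim C q). \<exists>v \<in> carrier_vec (pdim B q). g q *\<^sub>v v = w)"
    using assms unfolding short_exact_def by (elim exE conjE) (intro that)
  have F: "f q \<in> carrier_mat (pdim B q) (pdim A q)" using f unfolding is_morph_def by blast
  have G: "g q \<in> carrier_mat (pdim C q) (pdim B q)" using g unfolding is_morph_def by blast
  show ?thesis
    using ses_dim[OF F G] ex[THEN spec, of q] by (elim conjE) simp
qed

lemma meas_discrete: "discrete_measure \<mu> \<Longrightarrow> f \<in> borel_measurable \<mu>"
  unfolding discrete_measure_def by (auto simp: measurable_def)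

lemma psi_sum:
  fixes \<mu> :: "'q::{finite,order} measure" and M :: "('q,'k::field) pmod"
  assumes "discrete_measure \<mu>"
  shows "psi \<mu> M = (\<Sum>q\<in>UNIV. emeasure \<mu> {q} * of_nat (pdim M q))"
proof -
  have "psi \<mu> M = \<integral>\<^sup>+ x. (\<Sum>q\<in>UNIV. of_nat (pdim M q) * indicator {q} x) \<partial>\<mu>"
    unfolding psi_def by (rule nn_integral_cong) (simp add: indicator_def)
  also have "\<dots> = (\<Sum>q\<in>UNIV. \<integral>\<^sup>+ x. of_nat (pdim M q) * indicator {q} x \<partial>\<mu>)"
    by (rule nn_integral_sum) (auto intro: meas_discrete[OF assms])
  also have "\<dots> = (\<Sum>q\<in>UNIV. emeasure \<mu> {q} * of_nat (pdim M q))"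
    using assms by (auto simp: discrete_measure_def mult.commute intro!: sum.cong nn_integral_cmult_indicator)
  finally show ?thesis .
qed

lemma psi_additive:
  fixes \<mu> :: "'q::{finite,order} measure"
  assumes "discrete_measure \<mu>"
  shows "additive_amplitude (psi \<mu> :: ('q,'k::field) pmod \<Rightarrow> ennreal)"
proof -
  have add: "psi \<mu> B = psi \<mu> A + psi \<mu> C" if "short_exact A B C" for A B C :: "('q,'k) pmod"
    unfolding psi_sum[OF assms] short_exact_dim[OF that]
    by (simp add: sum.distrib distrib_left)
  have le1: "x \<le> x + y" and le2: "y \<le> x + y" for x y :: ennreal
    by (simp_all add: add_increasing2 add_increasing)
  have z: "psi \<mu> (zero_pmod :: ('q,'k) pmod) = 0"
    unfolding psi_sum[OF assms] by simp
  show ?thesis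
    unfolding additive_amplitude_def amplitude_def
  proof (intro conjI allI impI z)
    fix A B C :: "('q,'k) pmod" assume se: "short_exact A B C"
    show "psi \<mu> A \<le> psi \<mu> B" unfolding add[OF se] by (rule le1)
    show "psi \<mu> C \<le> psi \<mu> B" unfolding add[OF se] by (rule le2)
    show "psi \<mu> B \<le> psi \<mu> A + psi \<mu> C" unfolding add[OF se] by simp
    show "psi \<mu> B = psi \<mu> A + psi \<mu> C" by (rule add[OF se])
  qed
qed


definition ptd :: "'q::order \<Rightarrow> 'q \<Rightarrow> nat" where
  "ptd q0 = (\<lambda>q. if q = q0 then 1 else 0)"
definition ptm :: "'q::order \<Rightarrow> 'q \<Rightarrow> 'q \<Rightarrow> 'k::field mat" where
  "ptm q0 = (\<lambda>q r. if q = q0 \<and> r = q0 then 1\<^sub>m 1 else 0\<^sub>m (ptd q0 r) (ptd q0 q))"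
definition pt :: "'q::order \<Rightarrow> ('q,'k::field) pmod" where
  "pt q0 = Abs_pmod (ptd q0, ptm q0)"

lemma ptm_carrier: "(ptm q0 q r :: 'k::field mat) \<in> carrier_mat (ptd q0 r) (ptd q0 q)"
  by (auto simp: ptm_def ptd_def)

lemma pt_is: "is_pmod (ptd q0, ptm q0 :: 'q::order \<Rightarrow> 'q \<Rightarrow> 'k::field mat)"
  unfolding is_pmod_def prod.case
proof (intro conjI allI impI)
  fix q r s :: 'q assume qr: "q \<le> r" and rs: "r \<le> s"
  show "(ptm q0 q s :: 'k mat) = ptm q0 r s * ptm q0 q r"
  proof (cases "q = q0 \<and> r = q0 \<and> s = q0")
    case True then show ?thesis by (simp add: ptm_def)
  next
    case False
    then have "ptd q0 s = 0 \<or> ptd q0 q = 0"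
      using qr rs by (auto simp: ptd_def dest: order.antisym)
    then show ?thesis
      by (rule mat_eq_zero_dim[OF ptm_carrier mult_carrier_mat[OF ptm_carrier ptm_carrier]])
  qed
qed (auto simp: ptm_def ptd_def)

lemma pdim_pt: "pdim (pt q0 :: ('q::order,'k::field) pmod) = ptd q0"
  unfolding pt_def by (rule Abs_pmod_dim[OF pt_is])
lemma pmap_pt: "pmap (pt q0 :: ('q::order,'k::field) pmod) = ptm q0"
  unfolding pt_def by (rule Abs_pmod_map[OF pt_is])

lemma psi_pt:
  fixes \<mu> :: "'q::{finite,order} measure"
  assumes "discrete_measure \<mu>"
  shows "psi \<mu> (pt q0 :: ('q,'k::field) pmod) = emeasure \<mu> {q0}"
  unfolding psi_sum[OF assms] pdim_pt by (simp add: ptd_def if_distrib cong: if_cong)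

lemma psi_inj: "inj_on (psi :: 'q::{finite, order} measure \<Rightarrow> ('q, 'k::field) pmod \<Rightarrow> ennreal)
           {\<mu>. discrete_measure \<mu>}"
proof (rule inj_onI)
  fix \<mu> \<nu> :: "'q measure"
  assume m: "\<mu> \<in> {\<mu>. discrete_measure \<mu>}" and n: "\<nu> \<in> {\<mu>. discrete_measure \<mu>}"
    and e: "(psi \<mu> :: ('q, 'k) pmod \<Rightarrow> ennreal) = psi \<nu>"
  have "emeasure \<mu> {q} = emeasure \<nu> {q}" for q
    using psi_pt[of \<mu> q, where 'k='k] psi_pt[of \<nu> q, where 'k='k] m n e by simp
  then show "\<mu> = \<nu>"
    using m n by (intro measure_eqI_finite[where A=UNIV]) (auto simp: discrete_measure_def)
qed

definition Pm :: "nat \<Rightarrow> 'k::field mat" where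
  "Pm d = mat (d - 1) d (\<lambda>(i,j). if j = Suc i then 1 else 0)"
definition Fm :: "nat \<Rightarrow> 'k::field mat" where
  "Fm d = mat d 1 (\<lambda>(i,j). if i = 0 then 1 else 0)"

lemma Pm_carrier: "Pm d \<in> carrier_mat (d - 1) d" by (simp add: Pm_def)
lemma Fm_carrier: "Fm d \<in> carrier_mat d 1" by (simp add: Fm_def)

lemma Fm_mult: "u \<in> carrier_vec 1 \<Longrightarrow> (Fm d :: 'k::field mat) *\<^sub>v u = vec d (\<lambda>i. if i = 0 then vec_index u 0 else 0)"
  by (intro eq_vecI) (auto simp: Fm_def scalar_prod_def)

lemma if01_mult: "(if P then 1 else 0) * (x::'a::semiring_1) = (if P then x else 0)" by simp

lemma Pm_mult: "v \<in> carrier_vec d \<Longrightarrow> (Pm d :: 'k::field mat) *\<^sub>v v = vec (d - 1) (\<lambda>i. vec_index v (Suc i))"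
  by (intro eq_vecI) (auto simp: Pm_def scalar_prod_def if01_mult cong: if_cong)


definition qd :: "('q::order,'k::field) pmod \<Rightarrow> 'q \<Rightarrow> 'q \<Rightarrow> nat" where
  "qd M q0 = (pdim M)(q0 := pdim M q0 - 1)"
definition qm :: "('q::order,'k::field) pmod \<Rightarrow> 'q \<Rightarrow> 'q \<Rightarrow> 'q \<Rightarrow> 'k mat" where
  "qm M q0 = (\<lambda>q r. if q = q0 \<and> r = q0 then 1\<^sub>m (pdim M q0 - 1)
      else if r = q0 then Pm (pdim M q0) * pmap M q q0
      else if q = q0 then 0\<^sub>m (pdim M r) (pdim M q0 - 1) else pmap M q r)"

lemma qm_carrier: "qm M q0 q r \<in> carrier_mat (qd M q0 r) (qd M q0 q)"
proof -
  have "Pm (pdim M q0) * pmap M q q0 \<in> carrier_mat (pdim M q0 - 1) (pdim M q)"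
    by (rule mult_carrier_mat[OF Pm_carrier pmap_carrier'])
  then show ?thesis using pmap_carrier'[of M] by (auto simp: qm_def qd_def)
qed

lemma qm_is:
  fixes M :: "('q::order,'k::field) pmod"
  assumes max: "\<And>r. q0 < r \<Longrightarrow> pdim M r = 0"
  shows "is_pmod (qd M q0, qm M q0)"
  unfolding is_pmod_def prod.case
proof (intro conjI allI impI)
  fix q r :: 'q assume "\<not> q \<le> r"
  then show "qm M q0 q r = 0\<^sub>m (qd M q0 r) (qd M q0 q)"
    using pmap_nle[of q r M] right_mult_zero_mat[OF Pm_carrier[of "pdim M q0"]]
    by (auto simp: qm_def qd_def)
next
  fix q :: 'q show "qm M q0 q q = 1\<^sub>m (qd M q0 q)" by (simp add: qm_def qd_def pmap_id)
next
  fix q r s :: 'q assume qr: "q \<le> r" and rs: "r \<le> s"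
  show "qm M q0 q s = qm M q0 r s * qm M q0 q r"
  proof (cases "s = q0")
    case s: True
    show ?thesis
    proof (cases "r = q0")
      case r: True
      show ?thesis
      proof (cases "q = q0")
        case True then show ?thesis using s r by (simp add: qm_def)
      next
        case False
        have c: "Pm (pdim M q0) * pmap M q q0 \<in> carrier_mat (pdim M q0 - 1) (pdim M q)"
          by (rule mult_carrier_mat[OF Pm_carrier pmap_carrier'])
        show ?thesis using s r False left_mult_one_mat[OF c] by (simp add: qm_def)
      qed
    next
      case r: False
      then have q: "q \<noteq> q0" using qr rs s by (auto dest: order.antisym)
      have "qm M q0 r s * qm M q0 q r = (Pm (pdim M q0) * pmap M r q0) * pmap M q r"
        using s r q by (simp add: qm_def)
      also have "\<dots> = Pm (pdim M q0) * (pmap M r q0 * pmap M q r)"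
        by (rule assoc_mult_mat[OF Pm_carrier pmap_carrier' pmap_carrier'])
      also have "\<dots> = qm M q0 q s"
        using s q pmap_comp[OF qr, of q0 M] rs by (simp add: qm_def)
      finally show ?thesis by simp
    qed
  next
    case s: False
    show ?thesis
    proof (cases "q = q0 \<or> r = q0")
      case False then show ?thesis using s pmap_comp[OF qr rs, of M] by (simp add: qm_def)
    next
      case True
      then have "q0 < s" using s qr rs by (auto simp: order.strict_iff_order intro: order.trans)
      then have "qd M q0 s = 0" using max s by (simp add: qd_def)
      then show ?thesis
        by (intro mat_eq_zero_dim[OF qm_carrier mult_carrier_mat[OF qm_carrier qm_carrier]]) simp
    qed
  qed
qed (rule qm_carrier)

lemma ses_quot:
  fixes M :: "('q::order,'k::field) pmod"
  assumes max: "\<And>r. q0 < r \<Longrightarrow> pdim M r = 0" and pos: "pdim M q0 > 0"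
  shows "short_exact (pt q0) M (Abs_pmod (qd M q0, qm M q0))"
proof -
  define C where "C = (Abs_pmod (qd M q0, qm M q0) :: ('q,'k) pmod)"
  define d where "d = pdim M q0"
  have dC: "pdim C = qd M q0" unfolding C_def by (rule Abs_pmod_dim[OF qm_is[OF max]])
  have mC: "pmap C = qm M q0" unfolding C_def by (rule Abs_pmod_map[OF qm_is[OF max]])
  define f where "f = (\<lambda>q. if q = q0 then Fm d else 0\<^sub>m (pdim M q) 0 :: 'k mat)"
  define g where "g = (\<lambda>q. if q = q0 then Pm d else 1\<^sub>m (pdim M q) :: 'k mat)"
  have fc: "f q \<in> carrier_mat (pdim M q) (pdim (pt q0 :: ('q,'k) pmod) q)" for q
    by (auto simp: f_def pdim_pt ptd_def Fm_def d_def)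
  have gc: "g q \<in> carrier_mat (pdim C q) (pdim M q)" for q
    by (auto simp: g_def dC qd_def Pm_def d_def)
  have mf: "is_morph (pt q0) M f"
    unfolding is_morph_def
  proof (intro conjI allI impI fc)
    fix q r :: 'q assume qr: "q \<le> r"
    show "pmap M q r * f q = f r * pmap (pt q0) q r"
    proof (cases "q = r")
      case True
      then show ?thesis using fc[of q] pmap_carrier'[of "pt q0 :: ('q,'k) pmod" q q]
        by (simp add: pmap_id left_mult_one_mat right_mult_one_mat)
    next
      case False
      then have "pdim M r = 0 \<or> pdim (pt q0 :: ('q,'k) pmod) q = 0"
        using qr max by (auto simp: pdim_pt ptd_def order.strict_iff_order)
      then show ?thesis
        by (rule mat_eq_zero_dim[OF mult_carrier_mat[OF pmap_carrier' fc] mult_carrier_mat[OF fc pmap_carrier']])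
    qed
  qed
  have mg: "is_morph M C g"
    unfolding is_morph_def
  proof (intro conjI allI impI gc)
    fix q r :: 'q assume qr: "q \<le> r"
    show "pmap C q r * g q = g r * pmap M q r"
    proof (cases "q = r")
      case True
      then show ?thesis using gc[of q] pmap_carrier'[of C q q] pmap_id[of C] pmap_id[of M]
        by (simp add: left_mult_one_mat right_mult_one_mat)
    next
      case False
      show ?thesis
      proof (cases "r = q0")
        case True
        then have "q \<noteq> q0" using False by simp
        then show ?thesis using True right_mult_one_mat[OF mult_carrier_mat[OF Pm_carrier pmap_carrier']]
          by (simp add: mC qm_def g_def d_def)
      next
        case r: False
        show ?thesis
        proof (cases "q = q0")
          case True
          then have "pdim C r = 0" using qr False max r by (simp add: dC qd_def order.strict_iff_order)
          then show ?thesis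
            by (rule mat_eq_zero_dim[OF mult_carrier_mat[OF pmap_carrier' gc] mult_carrier_mat[OF gc pmap_carrier'] disjI1])
        next
          case q: False
          then show ?thesis using r pmap_carrier'[of M q r]
            by (simp add: mC qm_def g_def left_mult_one_mat right_mult_one_mat)
        qed
      qed
    qed
  qed
  have ex: "(\<forall>u \<in> carrier_vec (pdim (pt q0 :: ('q,'k) pmod) q). f q *\<^sub>v u = 0\<^sub>v (pdim M q) \<longrightarrow> u = 0\<^sub>v (pdim (pt q0 :: ('q,'k) pmod) q)) \<and>
       (\<forall>v \<in> carrier_vec (pdim M q). g q *\<^sub>v v = 0\<^sub>v (pdim C q) \<longleftrightarrow>
            (\<exists>u \<in> carrier_vec (pdim (pt q0 :: ('q,'k) pmod) q). f q *\<^sub>v u = v)) \<and>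
       (\<forall>w \<in> carrier_vec (pdim C q). \<exists>v \<in> carrier_vec (pdim M q). g q *\<^sub>v v = w)" for q
  proof (cases "q = q0")
    case False
    have z: "u \<in> carrier_vec 0 \<Longrightarrow> u = 0\<^sub>v 0" for u :: "'k vec" by (auto intro!: eq_vecI)
    have z2: "u \<in> carrier_vec 0 \<Longrightarrow> 0\<^sub>m n 0 *\<^sub>v u = 0\<^sub>v n" for n and u :: "'k vec"
      by (auto simp: scalar_prod_def intro!: eq_vecI)
    have z3: "\<exists>u::'k vec. u \<in> carrier_vec 0" by (rule exI[of _ "0\<^sub>v 0"]) simp
    show ?thesis using False z3
      by (auto simp: f_def g_def dC qd_def pdim_pt ptd_def z z2 intro!: bexI[of _ "0\<^sub>v 0"])
  next
    case True
    have d0: "d > 0" using pos by (simp add: d_def)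
    have P1: "pdim (pt q0 :: ('q,'k) pmod) q = 1" using True by (simp add: pdim_pt ptd_def)
    have PC: "pdim C q = d - 1" using True by (simp add: dC qd_def d_def)
    have PM: "pdim M q = d" using True by (simp add: d_def)
    show ?thesis unfolding P1 PC PM
    proof (intro conjI ballI impI iffI)
      fix u :: "'k vec" assume u: "u \<in> carrier_vec 1" and e: "f q *\<^sub>v u = 0\<^sub>v d"
      have "vec_index (f q *\<^sub>v u) 0 = vec_index u 0" using True u d0 by (simp add: f_def Fm_mult)
      then have "vec_index u 0 = 0" using e d0 by simp
      then show "u = 0\<^sub>v 1" using u by (auto intro!: eq_vecI)
    next
      fix v :: "'k vec" assume v: "v \<in> carrier_vec d" and e: "g q *\<^sub>v v = 0\<^sub>v (d - 1)"
      have vi: "vec_index v (Suc i) = 0" if "i < d - 1" for i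
      proof -
        have "vec_index (g q *\<^sub>v v) i = vec_index v (Suc i)" using True v that by (simp add: g_def Pm_mult)
        then show ?thesis using e that by simp
      qed
      show "\<exists>u\<in>carrier_vec 1. f q *\<^sub>v u = v"
      proof (intro bexI)
        show "vec 1 (\<lambda>_. vec_index v 0) \<in> carrier_vec 1" by simp
        show "f q *\<^sub>v vec 1 (\<lambda>_. vec_index v 0) = v"
          using True v vi by (auto simp: f_def Fm_mult intro!: eq_vecI)
            (metis Suc_pred less_Suc_eq_0_disj less_diff_conv add_Suc_right add_0_right Suc_less_eq)
      qed
    next
      fix v :: "'k vec" assume v: "v \<in> carrier_vec d" and e: "\<exists>u\<in>carrier_vec 1. f q *\<^sub>v u = v"
      then obtain u where u: "u \<in> carrier_vec 1" and uv: "f q *\<^sub>v u = v" by blast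
      show "g q *\<^sub>v v = 0\<^sub>v (d - 1)"
        using True v u uv by (auto simp: f_def g_def Fm_mult Pm_mult intro!: eq_vecI)
    next
      fix w :: "'k vec" assume w: "w \<in> carrier_vec (d - 1)"
      show "\<exists>v\<in>carrier_vec d. g q *\<^sub>v v = w"
      proof (intro bexI)
        show "vec d (\<lambda>i. if i = 0 then 0 else vec_index w (i - 1)) \<in> carrier_vec d" by simp
        show "g q *\<^sub>v vec d (\<lambda>i. if i = 0 then 0 else vec_index w (i - 1)) = w"
          using True w by (auto simp: g_def Pm_mult intro!: eq_vecI)
      qed
    qed
  qed
  show ?thesis
    unfolding short_exact_def C_def[symmetric] using mf mg ex by blast
qed

lemma decomp:
  fixes \<alpha> :: "('q::{finite,order},'k::field) pmod \<Rightarrow> ennreal"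
  assumes aa: "additive_amplitude \<alpha>"
  shows "\<alpha> M = (\<Sum>q\<in>UNIV. \<alpha> (pt q) * of_nat (pdim M q))"
proof (induction "\<Sum>q\<in>UNIV. pdim M q" arbitrary: M rule: less_induct)
  case less
  show ?case
  proof (cases "\<forall>q. pdim M q = 0")
    case True
    then have "M = zero_pmod" by (intro all_zero_pmod) simp
    moreover have "\<alpha> zero_pmod = 0" using aa unfolding additive_amplitude_def amplitude_def by blast
    ultimately show ?thesis using True by simp
  next
    case False
    then have ne: "{q. pdim M q > 0} \<noteq> {}" by auto
    have "\<exists>m\<in>{q. pdim M q > 0}. \<forall>b\<in>{q. pdim M q > 0}. m \<le> b \<longrightarrow> m = b"
      by (rule finite_has_maximal[OF _ ne]) simp
    then obtain q0 where q0: "q0 \<in> {q. pdim M q > 0}"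
      and mx: "\<forall>b\<in>{q. pdim M q > 0}. q0 \<le> b \<longrightarrow> q0 = b"
      by (elim bexE)
    have max: "pdim M r = 0" if "q0 < r" for r
    proof (rule ccontr)
      assume "pdim M r \<noteq> 0"
      then have "r \<in> {q. pdim M q > 0}" by simp
      then have "q0 = r" using mx that by (simp add: order.strict_implies_order)
      then show False using that by simp
    qed
    have pos: "pdim M q0 > 0" using q0 by simp
    define C where "C = (Abs_pmod (qd M q0, qm M q0) :: ('q,'k) pmod)"
    have dC: "pdim C = qd M q0" unfolding C_def by (rule Abs_pmod_dim[OF qm_is[OF max]])
    have se: "short_exact (pt q0) M C" unfolding C_def by (rule ses_quot[OF max pos])
    have split: "pdim M q = pdim C q + (if q = q0 then 1 else 0)" for q
      using pos by (simp add: dC qd_def)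
    have sumC: "(\<Sum>q\<in>UNIV. pdim M q) = (\<Sum>q\<in>UNIV. pdim C q) + 1"
      unfolding split by (simp add: sum.distrib)
    have IH: "\<alpha> C = (\<Sum>q\<in>UNIV. \<alpha> (pt q) * of_nat (pdim C q))"
      by (rule less) (simp add: sumC)
    have "\<alpha> M = \<alpha> (pt q0) + \<alpha> C"
      using aa se unfolding additive_amplitude_def by blast
    also have "\<dots> = (\<Sum>q\<in>UNIV. \<alpha> (pt q) * of_nat (pdim M q))"
    proof -
      have d: "(\<Sum>q\<in>UNIV. \<alpha> (pt q) * of_nat (if q = q0 then 1 else 0)) = \<alpha> (pt q0)"
      proof -
        have "(\<Sum>q\<in>UNIV. \<alpha> (pt q) * of_nat (if q = q0 then 1 else 0)) = (\<Sum>q\<in>UNIV. if q = q0 then \<alpha> (pt q) else 0)"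
          by (rule sum.cong) auto
        then show ?thesis by simp
      qed
      have "(\<Sum>q\<in>UNIV. \<alpha> (pt q) * of_nat (pdim M q)) =
          (\<Sum>q\<in>UNIV. \<alpha> (pt q) * of_nat (pdim C q) + \<alpha> (pt q) * of_nat (if q = q0 then 1 else 0))"
        by (rule sum.cong[OF refl]) (simp only: split of_nat_add distrib_left)
      also have "\<dots> = \<alpha> C + \<alpha> (pt q0)"
        by (simp only: sum.distrib d IH)
      finally show ?thesis by (simp add: add.commute)
    qed
    finally show ?thesis .
  qed
qed

theorem mainTheorem2:
  shows "bij_betw (psi :: 'q::{finite, order} measure \<Rightarrow> ('q, 'k::field) pmod \<Rightarrow> ennreal)
           {\<mu>. discrete_measure \<mu>} {\<alpha>. additive_amplitude \<alpha>}"
  unfolding bij_betw_def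
proof (intro conjI psi_inj equalityI subsetI)
  fix \<alpha> :: "('q,'k) pmod \<Rightarrow> ennreal" assume "\<alpha> \<in> psi ` {\<mu>. discrete_measure \<mu>}"
  then obtain \<mu> where "discrete_measure \<mu>" and "\<alpha> = psi \<mu>" by blast
  then show "\<alpha> \<in> {\<alpha>. additive_amplitude \<alpha>}" using psi_additive by simp
next
  fix \<alpha> :: "('q,'k) pmod \<Rightarrow> ennreal" assume "\<alpha> \<in> {\<alpha>. additive_amplitude \<alpha>}"
  then have aa: "additive_amplitude \<alpha>" by simp
  define \<mu> where "\<mu> = point_measure (UNIV :: 'q set) (\<lambda>q. \<alpha> (pt q))"
  have dm: "discrete_measure \<mu>"
    by (simp add: discrete_measure_def \<mu>_def space_point_measure sets_point_measure)
  have em: "emeasure \<mu> {q} = \<alpha> (pt q)" for q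
    unfolding \<mu>_def by (subst emeasure_point_measure_finite) auto
  have "psi \<mu> = \<alpha>"
  proof (rule ext)
    fix M :: "('q,'k) pmod"
    show "psi \<mu> M = \<alpha> M" unfolding psi_sum[OF dm] em by (rule decomp[OF aa, symmetric])
  qed
  then show "\<alpha> \<in> psi ` {\<mu>. discrete_measure \<mu>}" using dm by blast
qed
end
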